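(* Let $T$ be a regular uniform-distribution-preserving transformation and let $V\sim\mathcal{U}(0,1)$ and $Z\sim\mathcal{U}(0,1)$ be independent. Then $T^\leftarrow(V,Z)\sim\mathcal{U}(0,1)$.
   Context: A function $T:[0,1]\to[0,1]$ is uniform-distribution-preserving (udp) if $T(U)\sim\mathcal{U}(0,1)$ whenever $U\sim\mathcal{U}(0,1)$. A udp transformation is regular if there is a finite partition $0=a_0<a_1<\dots<a_L=1$ such that $T$ is continuously differentiable on each $A_\ell=(a_{\ell-1},a_\ell)$, $\ell=1,\dots,L$. Let $A=\bigcup_{\ell}A_\ell$. The stochastic inverse of a regular udp transformation $T$ is defined as follows: for $x\in T(A)$, let $\{u\in A: T(u)=x\}=\{r_1(x),\dots,r_{n(x)}(x)\}$ (this set is finite and the weights below sum to one); let $G_x$ be the distribution function of the discrete random variable taking value $r_i(x)$ with probability $1/|T'(r_i(x))|$, $i=1,\dots,n(x)$, and set $T^\leftarrow(x,Z)=G_x^{-1}(Z)$, where $G^{-1}(z)=\inf\{t:G(t)\ge z\}$. For $x\notin T(A)$ set $T^\leftarrow(x,Z)=0$. *)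

theory Defs
  imports "HOL-Probability.Probability"
begin

definition U01 :: "real measure" where
  "U01 = uniform_measure lborel {0..1}"

text \<open>Uniform-distribution-preserving map T : [0,1] -> [0,1]. Values of T outside [0,1]
  are irrelevant, so we push forward the map that is T on [0,1] and 0 elsewhere.\<close>
definition udp :: "(real \<Rightarrow> real) \<Rightarrow> bool" where
  "udp T \<longleftrightarrow> (\<forall>u\<in>{0..1}. T u \<in> {0..1}) \<and>
     distr U01 borel (\<lambda>u. if u \<in> {0..1} then T u else 0) = U01"

definition regular_partition :: "(real \<Rightarrow> real) \<Rightarrow> (nat \<Rightarrow> real) \<Rightarrow> nat \<Rightarrow> bool" where
  "regular_partition T a L \<longleftrightarrow> L \<ge> 1 \<and> a 0 = 0 \<and> a L = 1 \<and>
     (\<forall>l<L. a l < a (Suc l)) \<and>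
     (\<forall>l\<in>{1..L}. T C1_differentiable_on {a (l - 1)<..<a l})"

definition regular_udp :: "(real \<Rightarrow> real) \<Rightarrow> bool" where
  "regular_udp T \<longleftrightarrow> udp T \<and> (\<exists>a L. regular_partition T a L)"

definition part_set :: "(nat \<Rightarrow> real) \<Rightarrow> nat \<Rightarrow> real set" where
  "part_set a L = (\<Union>l\<in>{1..L}. {a (l - 1)<..<a l})"

definition G_dist :: "(real \<Rightarrow> real) \<Rightarrow> (nat \<Rightarrow> real) \<Rightarrow> nat \<Rightarrow> real \<Rightarrow> real \<Rightarrow> real" where
  "G_dist T a L x t =
     (\<Sum>r\<in>{r \<in> part_set a L. T r = x \<and> r \<le> t}. 1 / \<bar>deriv T r\<bar>)"

definition stoch_inv :: "(real \<Rightarrow> real) \<Rightarrow> (nat \<Rightarrow> real) \<Rightarrow> nat \<Rightarrow> real \<Rightarrow> real \<Rightarrow> real" where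
  "stoch_inv T a L x z =
     (if x \<in> T ` part_set a L then Inf {t. G_dist T a L x t \<ge> z} else 0)"

end

theory Submission
  imports Defs
begin

locale setup0 =
  fixes T :: "real \<Rightarrow> real" and a :: "nat \<Rightarrow> real" and L :: nat
  assumes udpT: "udp T" and rp: "regular_partition T a L"
begin

definition I :: "nat \<Rightarrow> real set" where "I l = {a (l - 1)<..<a l}"

lemma L1: "L \<ge> 1" and a0: "a 0 = 0" and aL: "a L = 1"
  and astep: "\<And>l. l < L \<Longrightarrow> a l < a (Suc l)"
  and C1: "\<And>l. l \<in> {1..L} \<Longrightarrow> T C1_differentiable_on I l"
  using rp by (auto simp: regular_partition_def I_def)

lemma amono: "i < j \<Longrightarrow> j \<le> L \<Longrightarrow> a i < a j"
proof (induction j)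
  case 0 then show ?case by simp
next
  case (Suc j)
  then show ?case using astep[of j] by (cases "i = j") auto
qed

lemma amono_le: "i \<le> j \<Longrightarrow> j \<le> L \<Longrightarrow> a i \<le> a j"
  using amono[of i j] by (cases "i = j") auto

lemma a_range: "k \<le> L \<Longrightarrow> a k \<in> {0..1}"
  using amono_le[of 0 k] amono_le[of k L] a0 aL by auto

lemma I_sub: "l \<in> {1..L} \<Longrightarrow> I l \<subseteq> {0<..<1}"
proof -
  assume l: "l \<in> {1..L}"
  have "0 \<le> a (l - 1)" using amono_le[of 0 "l - 1"] a0 l by auto
  moreover have "a l \<le> 1" using amono_le[of l L] aL l by auto
  ultimately show ?thesis by (auto simp: I_def)
qed

lemma I_disj: "l \<in> {1..L} \<Longrightarrow> m \<in> {1..L} \<Longrightarrow> l \<noteq> m \<Longrightarrow> I l \<inter> I m = {}"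
proof -
  have *: "I l \<inter> I m = {}" if "l \<in> {1..L}" "m \<in> {1..L}" "l < m" for l m
  proof -
    have "a l \<le> a (m - 1)" using amono_le[of l "m - 1"] that by auto
    then show ?thesis by (auto simp: I_def)
  qed
  assume "l \<in> {1..L}" "m \<in> {1..L}" "l \<noteq> m"
  then show ?thesis using *[of l m] *[of m l] by (cases "l < m") auto
qed

lemma a_notin_I: "k \<le> L \<Longrightarrow> l \<in> {1..L} \<Longrightarrow> a k \<notin> I l"
proof -
  assume k: "k \<le> L" and l: "l \<in> {1..L}"
  show ?thesis
  proof (cases "k < l")
    case True
    have "a k \<le> a (l - 1)" using amono_le[of k "l - 1"] l True by auto
    then show ?thesis by (auto simp: I_def)
  next
    case False then show ?thesis using amono_le[of l k] k by (auto simp: I_def)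
  qed
qed

lemma cover: assumes "x \<in> {0..1}" shows "x \<in> a ` {0..L} \<or> (\<exists>l\<in>{1..L}. x \<in> I l)"
proof -
  define K where "K = {k. k \<le> L \<and> a k \<le> x}"
  have "0 \<in> K" using a0 assms by (auto simp: K_def)
  have fK: "finite K" by (auto simp: K_def)
  define k where "k = Max K"
  have kK: "k \<in> K" using fK \<open>0 \<in> K\<close> k_def Max_in by blast
  show ?thesis
  proof (cases "a k = x")
    case True then show ?thesis using kK by (auto simp: K_def)
  next
    case False
    with kK have lt: "a k < x" "k \<le> L" by (auto simp: K_def)
    have "k \<noteq> L" using lt aL assms by auto
    then have "Suc k \<le> L" using lt by auto
    have "Suc k \<notin> K"
    proof
      assume "Suc k \<in> K" then have "Suc k \<le> k" using fK k_def Max_ge[of K "Suc k"] by simp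
      then show False by simp
    qed
    then have "x < a (Suc k)" using \<open>Suc k \<le> L\<close> by (auto simp: K_def)
    then have "x \<in> I (Suc k)" using lt by (auto simp: I_def)
    then show ?thesis using \<open>Suc k \<le> L\<close> by force
  qed
qed

lemma part_set_eq: "part_set a L = (\<Union>l\<in>{1..L}. I l)"
  by (simp add: part_set_def I_def)

lemma Tderiv: "l \<in> {1..L} \<Longrightarrow> x \<in> I l \<Longrightarrow> (T has_real_derivative deriv T x) (at x)"
  using C1[of l] unfolding C1_differentiable_on_eq
  by (metis DERIV_deriv_iff_real_differentiable)

lemma Tderiv_cont: "l \<in> {1..L} \<Longrightarrow> continuous_on (I l) (deriv T)"
proof -
  assume l: "l \<in> {1..L}"
  have "continuous_on (I l) (\<lambda>x. vector_derivative T (at x))"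
    using C1[OF l] unfolding C1_differentiable_on_eq by blast
  moreover have "\<And>x. x \<in> I l \<Longrightarrow> vector_derivative T (at x) = deriv T x"
    using Tderiv[OF l] by (metis has_real_derivative_iff_has_vector_derivative vector_derivative_at)
  ultimately show ?thesis using continuous_on_eq by blast
qed

lemma Tcont: "l \<in> {1..L} \<Longrightarrow> continuous_on (I l) T"
  using Tderiv by (meson DERIV_isCont continuous_at_imp_continuous_on)

definition Tt :: "real \<Rightarrow> real" where "Tt u = (if u \<in> {0..1} then T u else 0)"

lemma U01_emeasure: "B \<in> sets borel \<Longrightarrow> emeasure U01 B = emeasure lborel (B \<inter> {0..1})"
  unfolding U01_def by (subst emeasure_uniform_measure) (auto simp: Int_commute divide_ennreal_def)

lemma sets_U01[simp, measurable_cong]: "sets U01 = sets borel" and space_U01[simp]: "space U01 = UNIV"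
  by (auto simp: U01_def)

lemma T_range: "u \<in> {0..1} \<Longrightarrow> T u \<in> {0..1}"
  using udpT by (auto simp: udp_def)

lemma Tt_cont: "continuous_on (- (a ` {0..L})) Tt"
proof (rule continuous_at_imp_continuous_on, rule ballI)
  fix x assume x: "x \<in> - (a ` {0..L})"
  show "isCont Tt x"
  proof (cases "x \<in> {0..1}")
    case True
    then obtain l where l: "l \<in> {1..L}" "x \<in> I l" using cover x by blast
    have "continuous_on (I l) Tt"
      using Tcont[OF l(1)] by (rule continuous_on_eq) (use I_sub[OF l(1)] in \<open>auto simp: Tt_def\<close>)
    moreover have "interior (I l) = I l" by (simp add: I_def interior_open)
    ultimately show ?thesis using l(2) continuous_on_interior by metis
  next
    case False
    then have "x < 0 \<or> x > 1" by auto
    then show ?thesis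
    proof
      assume "x < 0"
      have "continuous_on {..<0} Tt" by (rule continuous_on_eq[OF continuous_on_const]) (auto simp: Tt_def)
      moreover have "interior {..<(0::real)} = {..<0}" by (simp add: interior_open)
      ultimately show ?thesis using \<open>x < 0\<close> continuous_on_interior by (metis lessThan_iff)
    next
      assume "x > 1"
      have "continuous_on {1<..} Tt" by (rule continuous_on_eq[OF continuous_on_const]) (auto simp: Tt_def)
      moreover have "interior {(1::real)<..} = {1<..}" by (simp add: interior_open)
      ultimately show ?thesis using \<open>x > 1\<close> continuous_on_interior by (metis greaterThan_iff)
    qed
  qed
qed

lemma Tt_meas[measurable]: "Tt \<in> borel_measurable borel"
  by (rule borel_measurable_continuous_countable_exceptions[OF _ Tt_cont]) auto

lemma udp_pre: assumes B: "B \<in> sets borel"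
  shows "emeasure lborel {u \<in> {0..1}. T u \<in> B} = emeasure lborel (B \<inter> {0..1})"
proof -
  have "distr U01 borel Tt = U01" using udpT by (simp add: udp_def Tt_def[abs_def])
  then have "emeasure (distr U01 borel Tt) B = emeasure U01 B" by simp
  also have "emeasure (distr U01 borel Tt) B = emeasure U01 (Tt -` B)"
    using B by (subst emeasure_distr) auto
  also have "\<dots> = emeasure lborel (Tt -` B \<inter> {0..1})"
    using B measurable_sets[OF Tt_meas B] by (subst U01_emeasure) auto
  also have "Tt -` B \<inter> {0..1} = {u \<in> {0..1}. T u \<in> B}" by (auto simp: Tt_def)
  finally show ?thesis using U01_emeasure[OF B] by simp
qed

lemma I_pre_sets: "B \<in> sets borel \<Longrightarrow> l \<in> {1..L} \<Longrightarrow> {u \<in> I l. T u \<in> B} \<in> sets borel"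
proof -
  assume B: "B \<in> sets borel" and l: "l \<in> {1..L}"
  have "{u \<in> I l. T u \<in> B} = I l \<inter> (Tt -` B)" using I_sub[OF l] by (auto simp: Tt_def)
  moreover have "I l \<in> sets borel" by (simp add: I_def)
  moreover have "Tt -` B \<in> sets borel" using measurable_sets[OF Tt_meas B] by simp
  ultimately show ?thesis by simp
qed

lemma pre01_sets: "B \<in> sets borel \<Longrightarrow> {u \<in> {0..1}. T u \<in> B} \<in> sets borel"
proof -
  assume B: "B \<in> sets borel"
  have "{u \<in> {0..1}. T u \<in> B} = {0..1} \<inter> (Tt -` B)" by (auto simp: Tt_def)
  moreover have "Tt -` B \<in> sets borel" using measurable_sets[OF Tt_meas B] by simp
  ultimately show ?thesis by simp
qed

lemma pieces_sum: assumes B: "B \<in> sets borel"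
  shows "(\<Sum>l\<in>{1..L}. emeasure lborel {u \<in> I l. T u \<in> B}) = emeasure lborel (B \<inter> {0..1})"
proof -
  have "(\<Sum>l\<in>{1..L}. emeasure lborel {u \<in> I l. T u \<in> B}) = emeasure lborel (\<Union>l\<in>{1..L}. {u \<in> I l. T u \<in> B})"
  proof (rule sum_emeasure)
    show "(\<lambda>l. {u \<in> I l. T u \<in> B}) ` {1..L} \<subseteq> sets lborel" using I_pre_sets[OF B] by auto
    show "disjoint_family_on (\<lambda>l. {u \<in> I l. T u \<in> B}) {1..L}"
      unfolding disjoint_family_on_def using I_disj by blast
  qed simp
  also have "\<dots> = emeasure lborel ((\<Union>l\<in>{1..L}. {u \<in> I l. T u \<in> B}) \<union> ({u \<in> {0..1}. T u \<in> B} \<inter> a ` {0..L}))"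
    by (rule emeasure_Un_null_set[symmetric]) (use I_pre_sets[OF B] in \<open>auto intro!: finite_imp_null_set_lborel\<close>)
  also have "(\<Union>l\<in>{1..L}. {u \<in> I l. T u \<in> B}) \<union> ({u \<in> {0..1}. T u \<in> B} \<inter> a ` {0..L}) = {u \<in> {0..1}. T u \<in> B}"
  proof (rule set_eqI, rule iffI)
    fix u assume "u \<in> (\<Union>l\<in>{1..L}. {u \<in> I l. T u \<in> B}) \<union> ({u \<in> {0..1}. T u \<in> B} \<inter> a ` {0..L})"
    then show "u \<in> {u \<in> {0..1}. T u \<in> B}"
    proof
      assume "u \<in> (\<Union>l\<in>{1..L}. {u \<in> I l. T u \<in> B})"
      then obtain l where "l \<in> {1..L}" "u \<in> I l" "T u \<in> B" by blast
      then show ?thesis using I_sub[of l] by auto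
    qed simp
  next
    fix u assume u: "u \<in> {u \<in> {0..1}. T u \<in> B}"
    then have "u \<in> a ` {0..L} \<or> (\<exists>l\<in>{1..L}. u \<in> I l)" using cover by simp
    then show "u \<in> (\<Union>l\<in>{1..L}. {u \<in> I l. T u \<in> B}) \<union> ({u \<in> {0..1}. T u \<in> B} \<inter> a ` {0..L})"
      using u by blast
  qed
  finally show ?thesis using udp_pre[OF B] by simp
qed

lemma deriv_ge1: assumes l: "l \<in> {1..L}" and x0: "x0 \<in> I l" shows "\<bar>deriv T x0\<bar> \<ge> 1"
proof (rule ccontr)
  assume "\<not> ?thesis"
  then have lt: "\<bar>deriv T x0\<bar> < 1" by simp
  define c where "c = (\<bar>deriv T x0\<bar> + 1) / 2"
  have c: "\<bar>deriv T x0\<bar> < c" "c < 1" "0 < c" using lt by (auto simp: c_def)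
  have "isCont (deriv T) x0"
  proof -
    have "interior (I l) = I l" by (simp add: I_def interior_open)
    then show ?thesis using Tderiv_cont[OF l] x0 continuous_on_interior by metis
  qed
  then have "\<exists>d>0. \<forall>y. dist y x0 < d \<longrightarrow> dist (deriv T y) (deriv T x0) < c - \<bar>deriv T x0\<bar>"
    unfolding continuous_at_eps_delta using c(1) by simp
  then obtain d1 where d1: "d1 > 0" "\<And>y. dist y x0 < d1 \<Longrightarrow> dist (deriv T y) (deriv T x0) < c - \<bar>deriv T x0\<bar>"
    by blast
  have "open (I l)" by (simp add: I_def)
  then obtain d2 where d2: "d2 > 0" "ball x0 d2 \<subseteq> I l"
    using x0 open_contains_ball by blast
  define d where "d = min d1 d2"
  have d: "d > 0" using d1 d2 by (simp add: d_def)
  have inI: "y \<in> I l" if "\<bar>y - x0\<bar> < d" for y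
  proof -
    have "y \<in> ball x0 d2" using that by (simp add: d_def dist_real_def abs_minus_commute)
    then show ?thesis using d2(2) by blast
  qed
  have smallder: "\<bar>deriv T y\<bar> < c" if "\<bar>y - x0\<bar> < d" for y
  proof -
    have "dist y x0 < d1" using that by (simp add: d_def dist_real_def)
    then have "\<bar>deriv T y - deriv T x0\<bar> < c - \<bar>deriv T x0\<bar>" using d1(2) by (simp add: dist_real_def)
    then show ?thesis by linarith
  qed
  have lip: "\<bar>T y - T x0\<bar> \<le> c * \<bar>y - x0\<bar>" if y: "\<bar>y - x0\<bar> < d" for y
  proof (cases "y = x0")
    case True then show ?thesis by simp
  next
    case False
    define p q where "p = min y x0" and "q = max y x0"
    have pq: "p < q" using False by (auto simp: p_def q_def)
    have "\<exists>z. p < z \<and> z < q \<and> T q - T p = (q - p) * deriv T z"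
    proof (rule MVT2[OF pq])
      fix x assume "p \<le> x" "x \<le> q"
      then have "\<bar>x - x0\<bar> < d" using y by (auto simp: p_def q_def)
      then show "DERIV T x :> deriv T x" by (rule Tderiv[OF l inI])
    qed
    then obtain z where z: "p < z" "z < q" "T q - T p = (q - p) * deriv T z" by blast
    have "\<bar>z - x0\<bar> < d" using z y by (auto simp: p_def q_def)
    then have "\<bar>deriv T z\<bar> < c" by (rule smallder)
    have "\<bar>T y - T x0\<bar> = \<bar>T q - T p\<bar>" by (auto simp: p_def q_def)
    also have "\<dots> = (q - p) * \<bar>deriv T z\<bar>" using z pq by (simp add: abs_mult)
    also have "\<dots> \<le> (q - p) * c" using \<open>\<bar>deriv T z\<bar> < c\<close> pq by (intro mult_left_mono) auto
    also have "q - p = \<bar>y - x0\<bar>" by (auto simp: p_def q_def)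
    finally show ?thesis by (simp add: mult.commute)
  qed
  define K where "K = {T x0 - c * d .. T x0 + c * d}"
  have sub: "{x0 - d <..< x0 + d} \<subseteq> {u \<in> {0..1}. T u \<in> K}"
  proof
    fix y assume y: "y \<in> {x0 - d <..< x0 + d}"
    then have y': "\<bar>y - x0\<bar> < d" by auto
    have "y \<in> {0..1}" using inI[OF y'] I_sub[OF l] by auto
    moreover have "\<bar>T y - T x0\<bar> \<le> c * d"
    proof -
      have "c * \<bar>y - x0\<bar> \<le> c * d" using y' c by (intro mult_left_mono) auto
      then show ?thesis using lip[OF y'] by linarith
    qed
    ultimately show "y \<in> {u \<in> {0..1}. T u \<in> K}" by (auto simp: K_def)
  qed
  have "ennreal (2 * d) = emeasure lborel {x0 - d <..< x0 + d}" using d by simp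
  also have "\<dots> \<le> emeasure lborel {u \<in> {0..1}. T u \<in> K}"
    by (rule emeasure_mono[OF sub]) (use pre01_sets[of K] in \<open>simp add: K_def\<close>)
  also have "\<dots> = emeasure lborel (K \<inter> {0..1})" by (rule udp_pre) (simp add: K_def)
  also have "\<dots> \<le> emeasure lborel K" by (rule emeasure_mono) (auto simp: K_def)
  also have "\<dots> = ennreal (2 * c * d)" using c d by (simp add: K_def)
  finally have "2 * d \<le> 2 * c * d" using c d by (simp add: ennreal_le_iff)
  then show False using c d by simp
qed

lemma deriv_nz: "l \<in> {1..L} \<Longrightarrow> x \<in> I l \<Longrightarrow> deriv T x \<noteq> 0"
proof -
  assume "l \<in> {1..L}" "x \<in> I l"
  from deriv_ge1[OF this] show ?thesis by auto
qed

lemma T_inj: assumes l: "l \<in> {1..L}" shows "inj_on T (I l)"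
proof -
  have *: False if xy: "x \<in> I l" "y \<in> I l" "x < y" "T x = T y" for x y
  proof -
    have sub: "{x..y} \<subseteq> I l" using xy by (auto simp: I_def)
    have "\<exists>z. x < z \<and> z < y \<and> DERIV T z :> 0"
    proof (rule Rolle[OF xy(3,4)])
      show "continuous_on {x..y} T" using Tcont[OF l] sub by (rule continuous_on_subset)
      show "T differentiable (at z)" if "x < z" "z < y" for z
      proof -
        have "z \<in> I l" using sub that by auto
        then show ?thesis using Tderiv[OF l] real_differentiable_def by blast
      qed
    qed
    then obtain z where z: "x < z" "z < y" "DERIV T z :> 0" by blast
    have zI: "z \<in> I l" using sub z by auto
    have "deriv T z = 0" using DERIV_unique[OF Tderiv[OF l zI] z(3)] .
    then show False using deriv_nz[OF l zI] by simp
  qed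
  show ?thesis unfolding inj_on_def
  proof (intro ballI impI)
    fix x y assume "x \<in> I l" "y \<in> I l" "T x = T y"
    then show "x = y" using *[of x y] *[of y x] by (metis linorder_neqE)
  qed
qed

definition rho :: "nat \<Rightarrow> real \<Rightarrow> real" where "rho l x = inv_into (I l) T x"
definition h :: "nat \<Rightarrow> real \<Rightarrow> real" where
  "h l x = (if x \<in> T ` I l then 1 / \<bar>deriv T (rho l x)\<bar> else 0)"

lemma rho_T: "l \<in> {1..L} \<Longrightarrow> u \<in> I l \<Longrightarrow> rho l (T u) = u"
  unfolding rho_def using T_inj by (simp add: inv_into_f_f)

lemma rho_in: "x \<in> T ` I l \<Longrightarrow> rho l x \<in> I l \<and> T (rho l x) = x"
  unfolding rho_def by (simp add: inv_into_into f_inv_into_f)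

lemma h_nonneg: "h l x \<ge> 0" by (simp add: h_def)

lemma h_T: "l \<in> {1..L} \<Longrightarrow> u \<in> I l \<Longrightarrow> \<bar>deriv T u\<bar> * h l (T u) = 1"
  using deriv_nz rho_T by (simp add: h_def)

lemma is_interval_I: "is_interval (I l)"
  unfolding is_interval_1 I_def by auto

lemma img_interval: assumes l: "l \<in> {1..L}" and S: "is_interval S" shows "T ` (I l \<inter> S) \<in> sets borel"
proof -
  have "is_interval (I l \<inter> S)" using S is_interval_I by (rule is_interval_Int[rotated])
  then have "connected (I l \<inter> S)" by (simp add: is_interval_connected)
  moreover have "continuous_on (I l \<inter> S) T" using Tcont[OF l] by (rule continuous_on_subset) auto
  ultimately have "connected (T ` (I l \<inter> S))" using connected_continuous_image by blast
  then have "is_interval (T ` (I l \<inter> S))" by (simp add: is_interval_connected_1)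
  then show ?thesis by (rule real_interval_borel_measurable)
qed

lemma TI_sets: "l \<in> {1..L} \<Longrightarrow> T ` I l \<in> sets borel"
  using img_interval[of l UNIV] by simp

lemma TIle_sets: "l \<in> {1..L} \<Longrightarrow> T ` (I l \<inter> {..t}) \<in> sets borel"
  by (rule img_interval) (auto simp: is_interval_1)

lemma h_meas: assumes l: "l \<in> {1..L}" shows "h l \<in> borel_measurable borel"
proof -
  define r' where "r' x = (if x \<in> T ` I l then rho l x else 0)" for x
  have r'm: "r' \<in> borel_measurable borel"
    unfolding borel_measurable_iff_le
  proof
    fix s
    have "{x \<in> space borel. r' x \<le> s} = T ` (I l \<inter> {..s}) \<union> (- (T ` I l) \<inter> {x. (0::real) \<le> s})"
    proof (rule set_eqI)
      fix x
      show "x \<in> {x \<in> space borel. r' x \<le> s} \<longleftrightarrow> x \<in> T ` (I l \<inter> {..s}) \<union> (- (T ` I l) \<inter> {x. (0::real) \<le> s})"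
      proof (cases "x \<in> T ` I l")
        case True
        then have r: "r' x = rho l x" "rho l x \<in> I l" "T (rho l x) = x" using rho_in by (auto simp: r'_def)
        show ?thesis
        proof
          assume "x \<in> {x \<in> space borel. r' x \<le> s}"
          then have "rho l x \<in> I l \<inter> {..s}" using r by auto
          then have "T (rho l x) \<in> T ` (I l \<inter> {..s})" by blast
          then show "x \<in> T ` (I l \<inter> {..s}) \<union> (- (T ` I l) \<inter> {x. (0::real) \<le> s})" using r by simp
        next
          assume "x \<in> T ` (I l \<inter> {..s}) \<union> (- (T ` I l) \<inter> {x. (0::real) \<le> s})"
          then have "x \<in> T ` (I l \<inter> {..s})" using True by blast
          then obtain u where u: "u \<in> I l" "u \<le> s" "x = T u" by auto
          then have "rho l x = u" using rho_T[OF l] by simp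
          then show "x \<in> {x \<in> space borel. r' x \<le> s}" using r u by simp
        qed
      next
        case False
        then show ?thesis by (auto simp: r'_def)
      qed
    qed
    moreover have "T ` (I l \<inter> {..s}) \<union> (- (T ` I l) \<inter> {x. (0::real) \<le> s}) \<in> sets borel"
      using TIle_sets[OF l, of s] TI_sets[OF l] by (cases "0 \<le> s") auto
    ultimately show "{x \<in> space borel. r' x \<le> s} \<in> sets borel" by simp
  qed
  define \<phi> where "\<phi> u = indicator (I l) u *\<^sub>R (1 / \<bar>deriv T u\<bar>)" for u
  have \<phi>m: "\<phi> \<in> borel_measurable borel" unfolding \<phi>_def[abs_def]
  proof (rule borel_measurable_continuous_on_indicator)
    show "I l \<in> sets borel" by (simp add: I_def)
    show "continuous_on (I l) (\<lambda>u. 1 / \<bar>deriv T u\<bar>)"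
      by (rule continuous_on_divide[OF continuous_on_const continuous_on_rabs[OF Tderiv_cont[OF l]]])
         (use deriv_nz[OF l] in auto)
  qed
  have eq: "h l = (\<lambda>x. indicator (T ` I l) x * \<phi> (r' x))"
  proof
    fix x show "h l x = indicator (T ` I l) x * \<phi> (r' x)"
      using rho_in[of x l] by (auto simp: h_def \<phi>_def r'_def)
  qed
  have "(\<lambda>x. indicator (T ` I l) x * \<phi> (r' x)) \<in> borel_measurable borel"
    by (intro borel_measurable_times borel_measurable_indicator measurable_compose[OF r'm \<phi>m] TI_sets[OF l])
  then show ?thesis using eq by simp
qed

lemma key: assumes l: "l \<in> {1..L}" and S: "S \<subseteq> I l" "S \<in> sets borel" and TS: "T ` S \<in> sets borel"
  shows "(\<integral>\<^sup>+x. ennreal (h l x) * indicator (T ` S) x \<partial>lborel) = emeasure lborel S"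
proof -
  have Sleb: "S \<in> sets lebesgue" using S by simp
  have der: "(T has_field_derivative deriv T x) (at x within S)" if "x \<in> S" for x
    using Tderiv[OF l] S that by (auto intro: has_field_derivative_at_within)
  have inj: "inj_on T S" using T_inj[OF l] S(1) by (rule inj_on_subset)
  have S01: "S \<subseteq> {0..1}" using S(1) I_sub[OF l] by auto
  have "emeasure lborel S \<le> emeasure lborel {0..(1::real)}" by (rule emeasure_mono[OF S01]) simp
  then have fin: "emeasure lborel S \<noteq> \<infinity>" by (auto simp: top_unique)
  have Slm: "S \<in> lmeasurable"
    by (rule bounded_set_imp_lmeasurable[OF bounded_subset[OF bounded_closed_interval S01] Sleb])
  have one: "(\<lambda>x. \<bar>deriv T x\<bar> * h l (T x)) absolutely_integrable_on S \<and>
      integral S (\<lambda>x. \<bar>deriv T x\<bar> * h l (T x)) = measure lborel S"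
  proof
    have "(\<lambda>x. 1::real) absolutely_integrable_on S" using Slm by simp
    then show "(\<lambda>x. \<bar>deriv T x\<bar> * h l (T x)) absolutely_integrable_on S"
      by (rule absolutely_integrable_spike[where S="{}"]) (use h_T[OF l] S(1) in auto)
    have "integral S (\<lambda>x. \<bar>deriv T x\<bar> * h l (T x)) = integral S (\<lambda>x. 1::real)"
      by (rule Henstock_Kurzweil_Integration.integral_cong) (use h_T[OF l] S(1) in auto)
    also have "\<dots> = measure lebesgue S" using lmeasure_integral[OF Slm] by simp
    also have "\<dots> = measure lborel S" using S(2) by simp
    finally show "integral S (\<lambda>x. \<bar>deriv T x\<bar> * h l (T x)) = measure lborel S" .
  qed
  then have two: "h l absolutely_integrable_on T ` S \<and> integral (T ` S) (h l) = measure lborel S"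
    using has_absolute_integral_change_of_variables_1'[OF Sleb der inj] by blast
  have int: "integrable lebesgue (\<lambda>x. indicator (T ` S) x *\<^sub>R h l x)"
    using two by (simp add: set_integrable_def)
  have "(\<integral>\<^sup>+x. ennreal (h l x) * indicator (T ` S) x \<partial>lborel) =
      (\<integral>\<^sup>+x. ennreal (indicator (T ` S) x *\<^sub>R h l x) \<partial>lebesgue)"
    by (subst nn_integral_completion) (auto intro!: nn_integral_cong simp: indicator_def)
  also have "\<dots> = ennreal (integral\<^sup>L lebesgue (\<lambda>x. indicator (T ` S) x *\<^sub>R h l x))"
    by (rule nn_integral_eq_integral[OF int]) (simp add: h_nonneg)
  also have "integral\<^sup>L lebesgue (\<lambda>x. indicator (T ` S) x *\<^sub>R h l x) = integral (T ` S) (h l)"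
    using set_lebesgue_integral_eq_integral(2)[OF two[THEN conjunct1]] by (simp add: set_lebesgue_integral_def)
  also have "\<dots> = measure lborel S" using two by simp
  also have "ennreal (measure lborel S) = emeasure lborel S" using fin by (simp add: emeasure_eq_ennreal_measure)
  finally show ?thesis .
qed

end


lemma galois:
  fixes R :: "real set" and w :: "real \<Rightarrow> real" and g :: "real \<Rightarrow> real"
  assumes fin: "finite R" and pos: "R \<subseteq> {0<..}" and wpos: "\<And>r. r \<in> R \<Longrightarrow> w r \<ge> 0"
    and g: "\<And>s. g s = sum w {r \<in> R. r \<le> s}" and z: "0 < z" "z \<le> g s1"
  shows "Inf {s. z \<le> g s} \<le> t \<longleftrightarrow> z \<le> g t"
proof -
  define S where "S = {s. z \<le> g s}"
  have gmono: "g s \<le> g s'" if "s \<le> s'" for s s'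
    unfolding g by (rule sum_mono2) (use fin that wpos in auto)
  have g0: "g s = 0" if "s \<le> 0" for s
  proof -
    have e: "{r \<in> R. r \<le> s} = {}" using pos that by fastforce
    show ?thesis unfolding g e by simp
  qed
  have bdd: "bdd_below S"
  proof (rule bdd_belowI)
    fix s assume "s \<in> S"
    then have "z \<le> g s" by (simp add: S_def)
    then show "0 \<le> s" using g0[of s] z(1) by (cases "s \<le> 0") auto
  qed
  have ne: "S \<noteq> {}" using z by (auto simp: S_def)
  show ?thesis unfolding S_def[symmetric]
  proof
    assume "z \<le> g t"
    then have "t \<in> S" by (simp add: S_def)
    then show "Inf S \<le> t" using bdd by (rule cInf_lower)
  next
    assume inf: "Inf S \<le> t"
    show "z \<le> g t"
    proof (rule ccontr)
      assume "\<not> z \<le> g t"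
      then have gt: "g t < z" by simp
      define R' where "R' = {r \<in> R. z \<le> g r}"
      have fR': "finite R'" using fin by (simp add: R'_def)
      have key: "\<exists>m\<in>R'. m \<le> s" if "s \<in> S" for s
      proof -
        define Q where "Q = {r \<in> R. r \<le> s}"
        have fQ: "finite Q" using fin by (simp add: Q_def)
        have "Q \<noteq> {}"
        proof
          assume "Q = {}"
          then have "g s = 0" by (simp only: g Q_def[symmetric] sum.empty)
          then show False using that z(1) by (simp add: S_def)
        qed
        define m where "m = Max Q"
        have mQ: "m \<in> Q" using Max_in[OF fQ \<open>Q \<noteq> {}\<close>] by (simp add: m_def)
        have "{r \<in> R. r \<le> m} = Q"
        proof
          show "{r \<in> R. r \<le> m} \<subseteq> Q" using mQ by (auto simp: Q_def)
          show "Q \<subseteq> {r \<in> R. r \<le> m}" using Max_ge[OF fQ] by (auto simp: m_def Q_def)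
        qed
        then have "g m = g s" by (simp add: g Q_def)
        then have "m \<in> R'" using mQ that by (auto simp: R'_def Q_def S_def)
        moreover have "m \<le> s" using mQ by (simp add: Q_def)
        ultimately show ?thesis by blast
      qed
      obtain s0 where "s0 \<in> S" using ne by blast
      then have neR': "R' \<noteq> {}" using key by blast
      define m0 where "m0 = Min R'"
      have m0R: "m0 \<in> R'" using Min_in[OF fR' neR'] by (simp add: m0_def)
      have "m0 \<le> Inf S"
      proof (rule cInf_greatest[OF ne])
        fix s assume "s \<in> S"
        then obtain m where "m \<in> R'" "m \<le> s" using key by blast
        then show "m0 \<le> s" using Min_le[OF fR'] by (fastforce simp: m0_def)
      qed
      moreover have "t < m0"
      proof (rule ccontr)
        assume "\<not> t < m0"
        then have "g m0 \<le> g t" using gmono by simp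
        moreover have "z \<le> g m0" using m0R by (simp add: R'_def)
        ultimately show False using gt by simp
      qed
      ultimately show False using inf by simp
    qed
  qed
qed

context setup0 begin

lemma part_I: "part_set a L = (\<Union>l\<in>{1..L}. I l)" by (rule part_set_eq)

lemma G_decomp: "G_dist T a L x t = (\<Sum>l\<in>{1..L}. h l x * indicator (T ` (I l \<inter> {..t})) x)"
proof -
  define P where "P l = {r \<in> I l. T r = x \<and> r \<le> t}" for l
  have Pdef: "{r \<in> part_set a L. T r = x \<and> r \<le> t} = (\<Union>l\<in>{1..L}. P l)"
    unfolding part_I P_def by blast
  have Psub: "P l \<subseteq> {rho l x}" if l: "l \<in> {1..L}" for l
  proof
    fix r assume "r \<in> P l"
    then have "r \<in> I l" "T r = x" by (auto simp: P_def)
    then have "rho l x = r" using rho_T[OF l] by auto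
    then show "r \<in> {rho l x}" by simp
  qed
  have finP: "finite (P l)" if "l \<in> {1..L}" for l using Psub[OF that] finite_subset by blast
  have disj: "P l \<inter> P m = {}" if "l \<in> {1..L}" "m \<in> {1..L}" "l \<noteq> m" for l m
    using I_disj[OF that] by (auto simp: P_def)
  have "G_dist T a L x t = (\<Sum>r\<in>(\<Union>l\<in>{1..L}. P l). 1 / \<bar>deriv T r\<bar>)"
    unfolding G_dist_def Pdef ..
  also have "\<dots> = (\<Sum>l\<in>{1..L}. \<Sum>r\<in>P l. 1 / \<bar>deriv T r\<bar>)"
    by (rule sum.UNION_disjoint) (use finP disj in auto)
  also have "\<dots> = (\<Sum>l\<in>{1..L}. h l x * indicator (T ` (I l \<inter> {..t})) x)"
  proof (rule sum.cong[OF refl])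
    fix l assume l: "l \<in> {1..L}"
    show "(\<Sum>r\<in>P l. 1 / \<bar>deriv T r\<bar>) = h l x * indicator (T ` (I l \<inter> {..t})) x"
    proof (cases "x \<in> T ` (I l \<inter> {..t})")
      case True
      then obtain u where u: "u \<in> I l" "u \<le> t" "x = T u" by auto
      then have r: "rho l x = u" using rho_T[OF l] by simp
      have "P l = {rho l x}" using Psub[OF l] r u by (auto simp: P_def)
      moreover have "x \<in> T ` I l" using u by auto
      ultimately show ?thesis using True by (simp add: h_def)
    next
      case False
      then have "P l = {}" by (auto simp: P_def)
      then show ?thesis using False by simp
    qed
  qed
  finally show ?thesis .
qed

lemma R_fin: "finite {r \<in> part_set a L. T r = x}"
proof -
  have "{r \<in> part_set a L. T r = x} \<subseteq> (\<lambda>l. rho l x) ` {1..L}"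
  proof
    fix r assume "r \<in> {r \<in> part_set a L. T r = x}"
    then obtain l where "l \<in> {1..L}" "r \<in> I l" "T r = x" unfolding part_I by blast
    then have "r = rho l x" using rho_T by metis
    then show "r \<in> (\<lambda>l. rho l x) ` {1..L}" using \<open>l \<in> {1..L}\<close> by blast
  qed
  then show ?thesis by (rule finite_subset) simp
qed

lemma part_sub: "part_set a L \<subseteq> {0<..<1}"
  unfolding part_I using I_sub by blast

lemma G_form: "G_dist T a L x s = sum (\<lambda>r. 1 / \<bar>deriv T r\<bar>) {r \<in> {r \<in> part_set a L. T r = x}. r \<le> s}"
  unfolding G_dist_def by (rule sum.cong) auto

lemma G_nonneg: "G_dist T a L x s \<ge> 0"
  unfolding G_dist_def by (rule sum_nonneg) simp

lemma G_le1: "G_dist T a L x s \<le> G_dist T a L x 1"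
proof -
  have f: "finite {r \<in> {r \<in> part_set a L. T r = x}. r \<le> 1}" using R_fin[of x] by (rule rev_finite_subset) auto
  show ?thesis unfolding G_form by (rule sum_mono2[OF f]) (use part_sub in auto)
qed

lemma SI_char: assumes x: "x \<in> T ` part_set a L"
  shows "stoch_inv T a L x z \<le> t \<longleftrightarrow>
    (z \<le> 0 \<and> Inf (UNIV::real set) \<le> t) \<or> (0 < z \<and> z \<le> G_dist T a L x t) \<or>
    (G_dist T a L x 1 < z \<and> Inf ({}::real set) \<le> t)"
proof -
  let ?g = "G_dist T a L x"
  have si: "stoch_inv T a L x z = Inf {s. z \<le> ?g s}" using x by (simp add: stoch_inv_def)
  consider "z \<le> 0" | "0 < z" "z \<le> ?g 1" | "?g 1 < z" by linarith
  then show ?thesis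
  proof cases
    case 1
    then have "{s. z \<le> ?g s} = UNIV" using G_nonneg[of x] by (auto intro: order_trans)
    then show ?thesis using 1 G_nonneg[of x 1] by (simp add: si)
  next
    case 2
    have "Inf {s. z \<le> ?g s} \<le> t \<longleftrightarrow> z \<le> ?g t"
      by (rule galois[OF R_fin, of _ "\<lambda>r. 1 / \<bar>deriv T r\<bar>", OF _ _ G_form 2])
         (use part_sub in auto)
    then show ?thesis using 2 by (simp add: si)
  next
    case 3
    then have "{s. z \<le> ?g s} = {}" using G_le1[of x] by (auto simp: not_le intro: le_less_trans)
    moreover have "\<not> (0 < z \<and> z \<le> ?g t)" using 3 G_le1[of x t] by simp
    moreover have "\<not> z \<le> 0" using 3 G_nonneg[of x 1] by simp
    ultimately show ?thesis using 3 by (simp add: si)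
  qed
qed

end


context setup0 begin

lemma G_meas: "(\<lambda>x. G_dist T a L x t) \<in> borel_measurable borel"
proof -
  have "(\<lambda>x. \<Sum>l\<in>{1..L}. h l x * indicator (T ` (I l \<inter> {..t})) x) \<in> borel_measurable borel"
    by (intro borel_measurable_sum borel_measurable_times h_meas borel_measurable_indicator TIle_sets) auto
  then show ?thesis by (simp add: G_decomp)
qed

lemma TA_sets: "T ` part_set a L \<in> sets borel"
proof -
  have "T ` part_set a L = (\<Union>l\<in>{1..L}. T ` I l)" unfolding part_I by blast
  then show ?thesis using TI_sets by auto
qed

lemma W_decomp: "G_dist T a L x 1 = (\<Sum>l\<in>{1..L}. h l x * indicator (T ` I l) x)"
proof -
  have "\<And>l. l \<in> {1..L} \<Longrightarrow> I l \<inter> {..1} = I l" using I_sub by fastforce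
  then show ?thesis unfolding G_decomp by (intro sum.cong) auto
qed

lemma W_int: assumes B: "B \<in> sets borel"
  shows "(\<integral>\<^sup>+x. ennreal (G_dist T a L x 1) * indicator B x \<partial>lborel) = emeasure lborel (B \<inter> {0..1})"
proof -
  have "(\<integral>\<^sup>+x. ennreal (G_dist T a L x 1) * indicator B x \<partial>lborel) =
      (\<integral>\<^sup>+x. (\<Sum>l\<in>{1..L}. ennreal (h l x) * indicator (T ` {u \<in> I l. T u \<in> B}) x) \<partial>lborel)"
  proof (rule nn_integral_cong)
    fix x
    have e: "ennreal (G_dist T a L x 1) = (\<Sum>l\<in>{1..L}. ennreal (h l x * indicator (T ` I l) x))"
      unfolding W_decomp by (rule sum_ennreal[symmetric]) (simp add: h_nonneg)
    show "ennreal (G_dist T a L x 1) * indicator B x = (\<Sum>l\<in>{1..L}. ennreal (h l x) * indicator (T ` {u \<in> I l. T u \<in> B}) x)"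
    proof (cases "x \<in> B")
      case True
      have "ennreal (h l x * indicator (T ` I l) x) = ennreal (h l x) * indicator (T ` {u \<in> I l. T u \<in> B}) x" for l
      proof (cases "x \<in> T ` I l")
        case xi: True
        then have "x \<in> T ` {u \<in> I l. T u \<in> B}" using \<open>x \<in> B\<close> by auto
        then show ?thesis using xi by simp
      next
        case xi: False
        then have "x \<notin> T ` {u \<in> I l. T u \<in> B}" by auto
        then show ?thesis using xi by simp
      qed
      then show ?thesis unfolding e using True by simp
    next
      case False
      then show ?thesis by (auto intro!: sum.neutral simp: indicator_def)
    qed
  qed
  also have "\<dots> = (\<Sum>l\<in>{1..L}. \<integral>\<^sup>+x. ennreal (h l x) * indicator (T ` {u \<in> I l. T u \<in> B}) x \<partial>lborel)"
  proof (rule nn_integral_sum)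
    fix l assume l: "l \<in> {1..L}"
    have "T ` {u \<in> I l. T u \<in> B} = T ` I l \<inter> B" by blast
    then have "T ` {u \<in> I l. T u \<in> B} \<in> sets borel" using TI_sets[OF l] B by simp
    then show "(\<lambda>x. ennreal (h l x) * indicator (T ` {u \<in> I l. T u \<in> B}) x) \<in> borel_measurable lborel"
      using h_meas[OF l] by simp
  qed
  also have "\<dots> = (\<Sum>l\<in>{1..L}. emeasure lborel {u \<in> I l. T u \<in> B})"
  proof (rule sum.cong[OF refl])
    fix l assume l: "l \<in> {1..L}"
    have "T ` {u \<in> I l. T u \<in> B} = T ` I l \<inter> B" by blast
    then have "T ` {u \<in> I l. T u \<in> B} \<in> sets borel" using TI_sets[OF l] B by simp
    then show "(\<integral>\<^sup>+x. ennreal (h l x) * indicator (T ` {u \<in> I l. T u \<in> B}) x \<partial>lborel) = emeasure lborel {u \<in> I l. T u \<in> B}"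
      by (intro key l I_pre_sets B) auto
  qed
  also have "\<dots> = emeasure lborel (B \<inter> {0..1})" by (rule pieces_sum[OF B])
  finally show ?thesis .
qed

lemma W_ae: "AE x in lborel. x \<in> {0..1} \<longrightarrow> G_dist T a L x 1 = 1"
proof -
  have "AE x in lborel. ennreal (G_dist T a L x 1) = indicator {0..1::real} x"
  proof (rule sigma_finite_measure.density_unique2[OF sigma_finite_lborel])
    show "(\<lambda>x. ennreal (G_dist T a L x 1)) \<in> borel_measurable lborel" using G_meas by simp
    show "(\<lambda>x. indicator {0..1::real} x :: ennreal) \<in> borel_measurable lborel" by simp
    fix A :: "real set" assume A: "A \<in> sets lborel"
    have "(\<integral>\<^sup>+x\<in>A. ennreal (G_dist T a L x 1) \<partial>lborel) = emeasure lborel (A \<inter> {0..1})"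
      using W_int[of A] A by simp
    also have "\<dots> = (\<integral>\<^sup>+x. indicator (A \<inter> {0..1}) x \<partial>lborel)"
      using A by simp
    also have "\<dots> = (\<integral>\<^sup>+x\<in>A. indicator {0..1::real} x \<partial>lborel)"
      by (rule nn_integral_cong) (auto split: split_indicator)
    finally show "(\<integral>\<^sup>+x\<in>A. ennreal (G_dist T a L x 1) \<partial>lborel) = (\<integral>\<^sup>+x\<in>A. indicator {0..1::real} x \<partial>lborel)" .
  qed
  then show ?thesis by eventually_elim (auto simp: indicator_def)
qed

lemma W1_in: "G_dist T a L x 1 = 1 \<Longrightarrow> x \<in> T ` part_set a L"
proof (rule ccontr)
  assume "G_dist T a L x 1 = 1" "x \<notin> T ` part_set a L"
  then have e: "{r \<in> part_set a L. T r = x \<and> r \<le> 1} = {}" by auto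
  have "G_dist T a L x 1 = 0" unfolding G_dist_def e by simp
  then show False using \<open>G_dist T a L x 1 = 1\<close> by simp
qed

lemma good_ae: "AE x in U01. G_dist T a L x 1 = 1 \<and> x \<in> T ` part_set a L"
  unfolding U01_def
  by (rule AE_uniform_measureI) (use W_ae W1_in in auto)

end


lemma U01_prob: "prob_space U01"
  unfolding U01_def by (rule prob_space_uniform_measure) auto

context setup0 begin

definition Fn :: "real \<times> real \<Rightarrow> real" where "Fn p = stoch_inv T a L (fst p) (snd p)"

lemma Fn_le: "Fn w \<le> t \<longleftrightarrow>
   (fst w \<in> T ` part_set a L \<and>
    ((snd w \<le> 0 \<and> Inf (UNIV::real set) \<le> t) \<or> (0 < snd w \<and> snd w \<le> G_dist T a L (fst w) t) \<or>
     (G_dist T a L (fst w) 1 < snd w \<and> Inf ({}::real set) \<le> t))) \<or>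
   (fst w \<notin> T ` part_set a L \<and> 0 \<le> t)"
proof (cases "fst w \<in> T ` part_set a L")
  case True
  then show ?thesis unfolding Fn_def using SI_char[OF True] by simp
next
  case False
  then show ?thesis unfolding Fn_def by (simp add: stoch_inv_def)
qed

lemma Fn_meas: "Fn \<in> borel_measurable (borel \<Otimes>\<^sub>M borel)"
  unfolding borel_measurable_iff_le
proof
  fix t
  note [measurable] = G_meas TA_sets
  have "{w \<in> space (borel \<Otimes>\<^sub>M borel). Fn w \<le> t} =
    {w \<in> space (borel \<Otimes>\<^sub>M borel). (fst w \<in> T ` part_set a L \<and>
    ((snd w \<le> 0 \<and> Inf (UNIV::real set) \<le> t) \<or> (0 < snd w \<and> snd w \<le> G_dist T a L (fst w) t) \<or>
     (G_dist T a L (fst w) 1 < snd w \<and> Inf ({}::real set) \<le> t))) \<or>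
   (fst w \<notin> T ` part_set a L \<and> 0 \<le> t)}"
    using Fn_le by blast
  also have "\<dots> \<in> sets (borel \<Otimes>\<^sub>M borel)" by measurable
  finally show "{w \<in> space (borel \<Otimes>\<^sub>M borel). Fn w \<le> t} \<in> sets (borel \<Otimes>\<^sub>M borel)" .
qed

lemma Fn_meas': "Fn \<in> borel_measurable (U01 \<Otimes>\<^sub>M U01)"
  using Fn_meas by (simp add: measurable_cong_sets[OF sets_pair_measure_cong[OF sets_U01 sets_U01] refl])

lemma section_measure:
  assumes x: "G_dist T a L x 1 = 1" "x \<in> T ` part_set a L"
  shows "emeasure U01 (Pair x -` (Fn -` {..t} \<inter> space (U01 \<Otimes>\<^sub>M U01))) = ennreal (G_dist T a L x t)"
proof -
  let ?g = "G_dist T a L x t"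
  define Y where "Y = Pair x -` (Fn -` {..t} \<inter> space (U01 \<Otimes>\<^sub>M U01))"
  have Xs: "Fn -` {..t} \<inter> space (U01 \<Otimes>\<^sub>M U01) \<in> sets (U01 \<Otimes>\<^sub>M U01)"
    using measurable_sets[OF Fn_meas', of "{..t}"] by simp
  have Ys: "Y \<in> sets borel" unfolding Y_def using sets_Pair1[OF Xs] by simp
  have Yeq: "Y = {z. (z \<le> 0 \<and> Inf (UNIV::real set) \<le> t) \<or> (0 < z \<and> z \<le> ?g) \<or> (1 < z \<and> Inf ({}::real set) \<le> t)}"
    unfolding Y_def using Fn_le[of "(x, _)" t] x by (auto simp: space_pair_measure)
  have g01: "0 \<le> ?g" "?g \<le> 1" using G_nonneg[of x t] G_le1[of x t] x by auto
  have sub1: "{0<..?g} \<subseteq> Y \<inter> {0..1}" using g01 by (auto simp: Yeq)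
  have sub2: "Y \<inter> {0..1} \<subseteq> {0..?g}" using g01 by (auto simp: Yeq)
  have "emeasure U01 Y = emeasure lborel (Y \<inter> {0..1})" by (rule U01_emeasure[OF Ys])
  moreover have "emeasure lborel (Y \<inter> {0..1}) \<le> ennreal ?g"
    using emeasure_mono[OF sub2, of lborel] g01 by simp
  moreover have "ennreal ?g \<le> emeasure lborel (Y \<inter> {0..1})"
    using emeasure_mono[OF sub1, of lborel] Ys g01 by simp
  ultimately show ?thesis unfolding Y_def[symmetric] by simp
qed

lemma sum_Ile: "(\<Sum>l\<in>{1..L}. emeasure lborel (I l \<inter> {..t})) = emeasure lborel ({..t} \<inter> {0..1})"
proof -
  have "(\<Sum>l\<in>{1..L}. emeasure lborel (I l \<inter> {..t})) = emeasure lborel (\<Union>l\<in>{1..L}. I l \<inter> {..t})"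
  proof (rule sum_emeasure)
    show "(\<lambda>l. I l \<inter> {..t}) ` {1..L} \<subseteq> sets lborel" by (auto simp: I_def)
    show "disjoint_family_on (\<lambda>l. I l \<inter> {..t}) {1..L}"
      unfolding disjoint_family_on_def using I_disj by blast
  qed simp
  also have "\<dots> = emeasure lborel ((\<Union>l\<in>{1..L}. I l \<inter> {..t}) \<union> (a ` {0..L} \<inter> {..t}))"
    by (rule emeasure_Un_null_set[symmetric]) (auto simp: I_def intro!: finite_imp_null_set_lborel)
  also have "(\<Union>l\<in>{1..L}. I l \<inter> {..t}) \<union> (a ` {0..L} \<inter> {..t}) = {..t} \<inter> {0..1}"
  proof (rule set_eqI, rule iffI)
    fix u assume "u \<in> (\<Union>l\<in>{1..L}. I l \<inter> {..t}) \<union> (a ` {0..L} \<inter> {..t})"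
    then show "u \<in> {..t} \<inter> {0..1}"
    proof
      assume "u \<in> (\<Union>l\<in>{1..L}. I l \<inter> {..t})"
      then obtain l where "l \<in> {1..L}" "u \<in> I l" "u \<le> t" by blast
      then show ?thesis using I_sub[of l] by auto
    next
      assume "u \<in> a ` {0..L} \<inter> {..t}"
      then show ?thesis using a_range by auto
    qed
  next
    fix u assume u: "u \<in> {..t} \<inter> {0..1}"
    then have "u \<in> a ` {0..L} \<or> (\<exists>l\<in>{1..L}. u \<in> I l)" using cover by simp
    then show "u \<in> (\<Union>l\<in>{1..L}. I l \<inter> {..t}) \<union> (a ` {0..L} \<inter> {..t})"
      using u by blast
  qed
  finally show ?thesis .
qed

lemma int_G: "(\<integral>\<^sup>+x. ennreal (G_dist T a L x t) \<partial>U01) = emeasure U01 {..t}"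
proof -
  have "(\<integral>\<^sup>+x. ennreal (G_dist T a L x t) \<partial>U01) =
      (\<integral>\<^sup>+x. ennreal (G_dist T a L x t) * indicator {0..1} x \<partial>lborel) / emeasure lborel {0..(1::real)}"
    unfolding U01_def by (rule nn_integral_uniform_measure) (use G_meas in auto)
  also have "emeasure lborel {0..(1::real)} = 1" by simp
  also have "(\<integral>\<^sup>+x. ennreal (G_dist T a L x t) * indicator {0..1} x \<partial>lborel) =
      (\<integral>\<^sup>+x. (\<Sum>l\<in>{1..L}. ennreal (h l x) * indicator (T ` (I l \<inter> {..t})) x) \<partial>lborel)"
  proof (rule nn_integral_cong)
    fix x
    have e: "ennreal (G_dist T a L x t) = (\<Sum>l\<in>{1..L}. ennreal (h l x * indicator (T ` (I l \<inter> {..t})) x))"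
      unfolding G_decomp by (rule sum_ennreal[symmetric]) (simp add: h_nonneg)
    have e2: "ennreal (h l x * indicator (T ` (I l \<inter> {..t})) x) = ennreal (h l x) * indicator (T ` (I l \<inter> {..t})) x" for l
      by (cases "x \<in> T ` (I l \<inter> {..t})") auto
    show "ennreal (G_dist T a L x t) * indicator {0..1} x = (\<Sum>l\<in>{1..L}. ennreal (h l x) * indicator (T ` (I l \<inter> {..t})) x)"
    proof (cases "x \<in> {0..1}")
      case True then show ?thesis unfolding e e2 by simp
    next
      case False
      have "x \<notin> T ` (I l \<inter> {..t})" if "l \<in> {1..L}" for l
      proof
        assume "x \<in> T ` (I l \<inter> {..t})"
        then obtain u where "u \<in> I l" "x = T u" by auto
        then show False using I_sub[OF that] T_range[of u] False by auto
      qed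
      then show ?thesis using False by (auto intro!: sum.neutral[symmetric])
    qed
  qed
  also have "\<dots> = (\<Sum>l\<in>{1..L}. \<integral>\<^sup>+x. ennreal (h l x) * indicator (T ` (I l \<inter> {..t})) x \<partial>lborel)"
    by (rule nn_integral_sum) (use h_meas TIle_sets in auto)
  also have "\<dots> = (\<Sum>l\<in>{1..L}. emeasure lborel (I l \<inter> {..t}))"
  proof (rule sum.cong[OF refl])
    fix l assume l: "l \<in> {1..L}"
    have "I l \<inter> {..t} \<in> sets borel" by (simp add: I_def)
    then show "(\<integral>\<^sup>+x. ennreal (h l x) * indicator (T ` (I l \<inter> {..t})) x \<partial>lborel) = emeasure lborel (I l \<inter> {..t})"
      by (intro key l TIle_sets[OF l]) auto
  qed
  also have "\<dots> = emeasure lborel ({..t} \<inter> {0..1})" by (rule sum_Ile)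
  also have "\<dots> = emeasure U01 {..t}" by (rule U01_emeasure[symmetric]) simp
  finally show ?thesis by (simp add: divide_ennreal_def)
qed

lemma dist_main: "distr (U01 \<Otimes>\<^sub>M U01) borel Fn = U01"
proof (rule cdf_unique)
  interpret U: prob_space U01 by (rule U01_prob)
  interpret P: prob_space "U01 \<Otimes>\<^sub>M U01" by (rule prob_space_pair[OF U01_prob U01_prob])
  show "real_distribution (distr (U01 \<Otimes>\<^sub>M U01) borel Fn)"
    by (rule P.real_distribution_distr) (rule Fn_meas')
  show "real_distribution U01"
    unfolding real_distribution_def real_distribution_axioms_def using U01_prob by simp
  show "cdf (distr (U01 \<Otimes>\<^sub>M U01) borel Fn) = cdf U01"
  proof
    fix t
    have "emeasure (distr (U01 \<Otimes>\<^sub>M U01) borel Fn) {..t} = emeasure (U01 \<Otimes>\<^sub>M U01) (Fn -` {..t} \<inter> space (U01 \<Otimes>\<^sub>M U01))"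
      by (rule emeasure_distr[OF Fn_meas']) simp
    also have "\<dots> = (\<integral>\<^sup>+x. emeasure U01 (Pair x -` (Fn -` {..t} \<inter> space (U01 \<Otimes>\<^sub>M U01))) \<partial>U01)"
      by (rule U.emeasure_pair_measure_alt) (use measurable_sets[OF Fn_meas', of "{..t}"] in simp)
    also have "\<dots> = (\<integral>\<^sup>+x. ennreal (G_dist T a L x t) \<partial>U01)"
    proof (rule nn_integral_cong_AE)
      show "AE x in U01. emeasure U01 (Pair x -` (Fn -` {..t} \<inter> space (U01 \<Otimes>\<^sub>M U01))) = ennreal (G_dist T a L x t)"
        using good_ae by eventually_elim (rule section_measure, auto)
    qed
    also have "\<dots> = emeasure U01 {..t}" by (rule int_G)
    finally have "emeasure (distr (U01 \<Otimes>\<^sub>M U01) borel Fn) {..t} = emeasure U01 {..t}" .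
    then show "cdf (distr (U01 \<Otimes>\<^sub>M U01) borel Fn) t = cdf U01 t"
      by (simp add: cdf_def measure_def)
  qed
qed

end

theorem theorem2:
  fixes M :: "'a measure" and T :: "real \<Rightarrow> real" and a :: "nat \<Rightarrow> real" and L :: nat
    and V Z :: "'a \<Rightarrow> real"
  assumes "prob_space M"
    and "regular_udp T" and "regular_partition T a L"
    and "V \<in> borel_measurable M" and "Z \<in> borel_measurable M"
    and "distr M borel V = U01" and "distr M borel Z = U01"
    and "prob_space.indep_var M borel V borel Z"
  shows "distr M borel (\<lambda>\<omega>. stoch_inv T a L (V \<omega>) (Z \<omega>)) = U01"
proof -
  interpret M: prob_space M by fact
  interpret S: setup0 T a L
    using assms(2,3) by unfold_locales (auto simp: regular_udp_def)
  have joint: "distr M (borel \<Otimes>\<^sub>M borel) (\<lambda>x. (V x, Z x)) = U01 \<Otimes>\<^sub>M U01"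
    using assms(8,6,7) M.indep_var_distribution_eq by metis
  have VZ: "(\<lambda>x. (V x, Z x)) \<in> measurable M (borel \<Otimes>\<^sub>M borel)"
    using assms(4,5) by measurable
  have "distr M borel (\<lambda>\<omega>. stoch_inv T a L (V \<omega>) (Z \<omega>)) = distr M borel (S.Fn \<circ> (\<lambda>x. (V x, Z x)))"
    by (simp add: S.Fn_def o_def)
  also have "\<dots> = distr (distr M (borel \<Otimes>\<^sub>M borel) (\<lambda>x. (V x, Z x))) borel S.Fn"
    by (rule distr_distr[symmetric, OF S.Fn_meas VZ])
  also have "\<dots> = U01" unfolding joint by (rule S.dist_main)
  finally show ?thesis .
qed


end
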